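(* Let $\mathcal{P}$ be a probability distribution on $\mathbb{R}^d$ whose support is contained in the unit ball $\{\mathbf{z}:\|\mathbf{z}\|\le 1\}$, let $\varphi:\mathbb{R}\to\mathbb{R}$ be twice differentiable with $|\varphi''(\alpha)|\le c\,|\varphi'(\alpha)|$ for all $\alpha$, for some constant $c>0$, and let $f(\mathbf{w})=\mathbb{E}_{\mathbf{z}\sim\mathcal{P}}[\varphi(\mathbf{w}^\top\mathbf{z})]$ with stochastic gradients $\nabla f_{\mathbf{z}}(\mathbf{w})=\varphi'(\mathbf{w}^\top\mathbf{z})\,\mathbf{z}$ (so that $\nabla^2 f(\mathbf{w})=\mathbb{E}_{\mathbf{z}}[\varphi''(\mathbf{w}^\top\mathbf{z})\mathbf{z}\mathbf{z}^\top]$). Let $\mathbf{w}\in\mathbb{R}^d$ and let $\mathbf{v}$ be a unit-length eigenvector of $\nabla^2 f(\mathbf{w})$ with eigenvalue $\lambda<0$. Then $\mathbb{E}_{\mathbf{z}}[(\nabla f_{\mathbf{z}}(\mathbf{w})^\top\mathbf{v})^2]\ge(\lambda/c)^2$. *)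

theory Defs
  imports "HOL-Probability.Probability"
begin

definition outer :: "real^'n \<Rightarrow> real^'n^'n" where
  "outer z = (\<chi> i j. z $ i * z $ j)"

text \<open>Hessian of f(w) = E_z[phi(w^T z)], given (as in the paper) by
  E_z[phi''(w^T z) z z^T], with phi2 the second derivative of phi.\<close>
definition glm_hessian :: "(real^'n::finite) measure \<Rightarrow> (real \<Rightarrow> real) \<Rightarrow> real^'n \<Rightarrow> real^'n^'n" where
  "glm_hessian M phi2 w = (\<integral> z. phi2 (w \<bullet> z) *\<^sub>R outer z \<partial>M)"

definition stoch_grad :: "(real \<Rightarrow> real) \<Rightarrow> real^'n \<Rightarrow> real^'n \<Rightarrow> real^'n" where
  "stoch_grad phi1 z w = phi1 (w \<bullet> z) *\<^sub>R z"

end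

theory Submission
  imports Defs
begin

lemma outer_mult: "outer z *v v = (z \<bullet> v) *\<^sub>R (z::real^'n)"
  by (simp add: outer_def matrix_vector_mult_def vec_eq_iff inner_vec_def sum_distrib_left sum_distrib_right mult.commute mult.left_commute)

theorem lemma4:
  fixes M :: "(real^'n) measure"
    and phi phi1 phi2 :: "real \<Rightarrow> real"
    and c lam :: real and w v :: "real^'n"
  assumes "prob_space M"
    and "sets M = sets borel"
    and "AE z in M. norm z \<le> 1"
    and "\<And>x. (phi has_real_derivative phi1 x) (at x)"
    and "\<And>x. (phi1 has_real_derivative phi2 x) (at x)"
    and "c > 0"
    and "\<And>x. \<bar>phi2 x\<bar> \<le> c * \<bar>phi1 x\<bar>"
    and "norm v = 1"
    and "glm_hessian M phi2 w *v v = lam *\<^sub>R v"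
    and "lam < 0"
  shows "(\<integral> z. (stoch_grad phi1 z w \<bullet> v)\<^sup>2 \<partial>M) \<ge> (lam / c)\<^sup>2"
proof -
  interpret P: prob_space M by fact
  define F where "F z = phi2 (w \<bullet> z) *\<^sub>R outer z" for z
  have vne: "v \<noteq> 0" using assms(8) by auto
  have intF: "integrable M F"
  proof (rule ccontr)
    assume "\<not> integrable M F"
    then have "glm_hessian M phi2 w = 0"
      unfolding glm_hessian_def F_def[symmetric] by (rule not_integrable_integral_eq)
    then have "lam *\<^sub>R v = 0" using assms(9) by simp
    then show False using vne assms(10) by simp
  qed
  define T where "T A = v \<bullet> (A *v v)" for A :: "real^'n^'n"
  have "linear T" unfolding T_def
    by (intro linearI) (auto simp: matrix_vector_mult_add_rdistrib inner_add_right
        matrix_vector_mult_scaleR scaleR_matrix_vector_assoc[symmetric])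
  then have blT: "bounded_linear T" by (simp add: linear_conv_bounded_linear)
  define g where "g z = phi2 (w \<bullet> z) * (z \<bullet> v)\<^sup>2" for z :: "real^'n"
  have Tg: "T (F z) = g z" for z
    by (simp add: T_def F_def g_def scaleR_matrix_vector_assoc[symmetric] outer_mult power2_eq_square inner_commute)
  have intg: "integrable M g"
    using integrable_bounded_linear[OF blT intF] by (simp add: Tg)
  have lam_eq: "lam = integral\<^sup>L M g"
  proof -
    have "integral\<^sup>L M g = integral\<^sup>L M (\<lambda>z. T (F z))" by (simp add: Tg)
    also have "\<dots> = T (glm_hessian M phi2 w)"
      unfolding glm_hessian_def F_def[symmetric] by (rule integral_bounded_linear[OF blT intF])
    also have "\<dots> = lam * (v \<bullet> v)" using assms(9) by (simp add: T_def)
    also have "v \<bullet> v = 1" using assms(8) by (simp add: norm_eq_sqrt_inner)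
    finally show ?thesis by simp
  qed
  have cont1: "continuous_on UNIV phi1"
    using assms(5) by (meson DERIV_isCont continuous_at_imp_continuous_on)
  obtain B where B: "\<And>x. x \<in> {-norm w..norm w} \<Longrightarrow> \<bar>phi1 x\<bar> \<le> B"
  proof -
    have "compact (phi1 ` {-norm w..norm w})"
      by (rule compact_continuous_image) (auto intro: continuous_on_subset[OF cont1])
    then have "bounded (phi1 ` {-norm w..norm w})" by (rule compact_imp_bounded)
    then obtain B where "\<forall>y\<in>phi1 ` {-norm w..norm w}. norm y \<le> B" by (auto simp: bounded_iff)
    then show ?thesis using that[of B] by auto
  qed
  define a where "a z = \<bar>phi1 (w \<bullet> z)\<bar> * \<bar>z \<bullet> v\<bar>" for z :: "real^'n"
  have contw: "continuous_on UNIV (\<lambda>z::real^'n. phi1 (w \<bullet> z))"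
    by (intro continuous_on_compose2[OF cont1]) (auto intro: continuous_intros)
  have meas: "f \<in> borel_measurable M" if "continuous_on UNIV f" for f :: "real^'n \<Rightarrow> real"
    using borel_measurable_continuous_onI[OF that] measurable_cong_sets[OF assms(2) refl] by blast
  have bnd: "AE z in M. \<bar>phi1 (w \<bullet> z)\<bar> \<le> B \<and> \<bar>z \<bullet> v\<bar> \<le> 1"
    using assms(3)
  proof eventually_elim
    case (elim z)
    have "\<bar>w \<bullet> z\<bar> \<le> norm w * norm z" by (rule Cauchy_Schwarz_ineq2)
    also have "\<dots> \<le> norm w" using elim mult_left_mono[OF elim, of "norm w"] by simp
    finally have "\<bar>phi1 (w \<bullet> z)\<bar> \<le> B" using B[of "w \<bullet> z"] by (simp add: abs_le_iff)
    moreover have "\<bar>z \<bullet> v\<bar> \<le> norm z * norm v" by (rule Cauchy_Schwarz_ineq2)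
    ultimately show ?case using elim assms(8) by simp
  qed
  have B0: "AE z in M. 0 \<le> B" using bnd by eventually_elim auto
  have abnd: "AE z in M. \<bar>a z\<bar> \<le> B" using bnd
  proof eventually_elim
    case (elim z)
    have "\<bar>a z\<bar> = \<bar>phi1 (w \<bullet> z)\<bar> * \<bar>z \<bullet> v\<bar>" by (simp add: a_def)
    also have "\<dots> \<le> B * 1" using elim by (intro mult_mono) auto
    finally show ?case by simp
  qed
  have inta: "integrable M a"
  proof (rule P.integrable_const_bound[where B=B])
    show "AE z in M. norm (a z) \<le> B" using abnd by simp
    show "a \<in> borel_measurable M" unfolding a_def
      by (intro meas continuous_intros contw)
  qed
  have inta2: "integrable M (\<lambda>z. (a z)\<^sup>2)"
  proof (rule P.integrable_const_bound[where B="B\<^sup>2"])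
    show "AE z in M. norm ((a z)\<^sup>2) \<le> B\<^sup>2" using abnd
    proof eventually_elim
      case (elim z)
      then have "\<bar>a z\<bar> ^ 2 \<le> B ^ 2" by (intro power_mono) auto
      then show ?case by simp
    qed
    show "(\<lambda>z. (a z)\<^sup>2) \<in> borel_measurable M" using inta by (intro borel_measurable_power) auto
  qed
  have le1: "AE z in M. c * (\<bar>phi1 (w \<bullet> z)\<bar> * (z \<bullet> v)\<^sup>2) \<le> c * a z" using bnd
  proof eventually_elim
    case (elim z)
    have "(z \<bullet> v)\<^sup>2 = \<bar>z \<bullet> v\<bar> * \<bar>z \<bullet> v\<bar>" by (simp add: power2_eq_square abs_mult_self_eq)
    also have "\<dots> \<le> \<bar>z \<bullet> v\<bar> * 1" using elim by (intro mult_left_mono) auto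
    finally have "\<bar>phi1 (w \<bullet> z)\<bar> * (z \<bullet> v)\<^sup>2 \<le> a z"
      unfolding a_def by (intro mult_left_mono) auto
    then show ?case using assms(6) by simp
  qed
  have intb: "integrable M (\<lambda>z. c * (\<bar>phi1 (w \<bullet> z)\<bar> * (z \<bullet> v)\<^sup>2))"
  proof (rule P.integrable_const_bound[where B="c * B"])
    show "AE z in M. norm (c * (\<bar>phi1 (w \<bullet> z)\<bar> * (z \<bullet> v)\<^sup>2)) \<le> c * B" using le1 abnd
    proof eventually_elim
      case (elim z)
      have "0 \<le> c * (\<bar>phi1 (w \<bullet> z)\<bar> * (z \<bullet> v)\<^sup>2)" using assms(6) by simp
      moreover have "c * a z \<le> c * B" using elim assms(6) by (intro mult_left_mono) auto
      ultimately show ?case using elim by simp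
    qed
    show "(\<lambda>z. c * (\<bar>phi1 (w \<bullet> z)\<bar> * (z \<bullet> v)\<^sup>2)) \<in> borel_measurable M"
      by (intro meas continuous_intros contw)
  qed
  have "-lam = \<bar>integral\<^sup>L M g\<bar>" using lam_eq assms(10) by simp
  also have "\<dots> \<le> integral\<^sup>L M (\<lambda>z. c * (\<bar>phi1 (w \<bullet> z)\<bar> * (z \<bullet> v)\<^sup>2))"
  proof (rule integral_abs_bound_integral[OF intg intb])
    fix z
    have "\<bar>g z\<bar> = \<bar>phi2 (w \<bullet> z)\<bar> * (z \<bullet> v)\<^sup>2" by (simp add: g_def abs_mult)
    also have "\<dots> \<le> (c * \<bar>phi1 (w \<bullet> z)\<bar>) * (z \<bullet> v)\<^sup>2"
      by (intro mult_right_mono assms(7)) auto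
    finally show "\<bar>g z\<bar> \<le> c * (\<bar>phi1 (w \<bullet> z)\<bar> * (z \<bullet> v)\<^sup>2)" by (simp add: mult.assoc)
  qed
  also have "\<dots> \<le> integral\<^sup>L M (\<lambda>z. c * a z)"
    using intb inta le1 by (intro integral_mono_AE) auto
  also have "\<dots> = c * integral\<^sup>L M a" by simp
  finally have l1: "-lam \<le> c * integral\<^sup>L M a" .
  have "(integral\<^sup>L M a)\<^sup>2 \<le> integral\<^sup>L M (\<lambda>z. (a z)\<^sup>2)"
    using P.variance_eq[OF inta inta2] P.variance_positive[of a] by simp
  also have "integral\<^sup>L M (\<lambda>z. (a z)\<^sup>2) = (\<integral> z. (stoch_grad phi1 z w \<bullet> v)\<^sup>2 \<partial>M)"
    by (simp add: a_def stoch_grad_def power_mult_distrib inner_commute)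
  finally have l2: "(integral\<^sup>L M a)\<^sup>2 \<le> (\<integral> z. (stoch_grad phi1 z w \<bullet> v)\<^sup>2 \<partial>M)" .
  have "lam\<^sup>2 \<le> (c * integral\<^sup>L M a)\<^sup>2"
    using l1 assms(10) by (intro power2_le_iff_abs_le[THEN iffD2] | simp)+
  also have "\<dots> = c\<^sup>2 * (integral\<^sup>L M a)\<^sup>2" by (simp add: power_mult_distrib)
  finally have "lam\<^sup>2 / c\<^sup>2 \<le> (integral\<^sup>L M a)\<^sup>2"
    using assms(6) by (simp add: divide_le_eq mult.commute)
  then show ?thesis using l2 by (simp add: power_divide)
qed

end
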